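(* Let $(\Omega,\mathcal F,\mathbb P)$ be nonatomic, $X$ a bounded random vector in $\mathbb R^N$ with $\mathbb E(X)=0$, and $Y$ a bounded real random variable. Then the value of $$\sup\{\mathbb E(VY):\ \mathrm{Law}(V)=\mathrm{uniform}([0,1]),\ \mathbb E(X\mid V)=0\}$$ coincides with the value of $$\sup\Big\{\mathbb E\Big(\int_0^1U_tY\,dt\Big):\ t\mapsto U_t\text{ nonincreasing},\ U_t\in\{0,1\},\ \mathbb E(U_t)=1-t,\ \mathbb E(U_tX)=0\ \text{for all }t\in[0,1]\Big\},$$ where the second supremum is over jointly measurable families $(U_t)_{t\in[0,1]}$ of random variables. *)

theory Defs
  imports "HOL-Probability.Probability"
begin

definition nonatomic :: "'a measure \<Rightarrow> bool" where
  "nonatomic M \<longleftrightarrow> (\<forall>A\<in>sets M. measure M A > 0 \<longrightarrow>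
      (\<exists>B\<in>sets M. B \<subseteq> A \<and> 0 < measure M B \<and> measure M B < measure M A))"

end

theory Submission
  imports Defs
begin

lemma lbint_as_integral:
  fixes f :: "real \<Rightarrow> real"
  shows "(LBINT t=0..1. f t) = integral\<^sup>L lborel (\<lambda>t. indicator {0<..<1::real} t * f t)"
  by (subst interval_integral_Ioo) (auto simp: set_lebesgue_integral_def)

lemma int_ind_Ioo: "0 \<le> (v::real) \<Longrightarrow> integral\<^sup>L lborel (indicator {0<..<v}) = v"
  by simp

lemma intg_ind_Ioo: "integrable lborel (indicator {0<..<(v::real)} :: real \<Rightarrow> real)"
proof (cases "0 \<le> v")
  case True then show ?thesis by (intro integrable_real_indicator) auto
qed simp

lemma lbint_step:
  "(LBINT t=0..1. (if t < v then 1 else 0) * y) = max 0 (min v 1) * (y::real)"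
proof -
  have "(LBINT t=0..1. (if t < v then 1 else 0) * y) = (LBINT t=0..1. (if t < v then 1 else (0::real))) * y"
    by (rule interval_lebesgue_integral_mult_left)
  also have "(LBINT t=0..1. (if t < v then 1 else (0::real))) = integral\<^sup>L lborel (indicator {0<..<min v 1})"
    unfolding lbint_as_integral
    by (rule Bochner_Integration.integral_cong) (auto simp: indicator_def)
  also have "\<dots> = max 0 (min v 1)" by (cases "0 \<le> min v 1") auto
  finally show ?thesis .
qed

lemma pw:
  fixes u :: "real \<Rightarrow> real"
  assumes meas: "u \<in> borel_measurable (restrict_space lborel {0..1})"
    and vals: "\<forall>t\<in>{0..1}. u t \<in> {0,1}"
    and mono: "\<forall>s\<in>{0..1}. \<forall>t\<in>{0..1}. s \<le> t \<longrightarrow> u t \<le> u s"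
  shows "0 \<le> (LBINT t=0..1. u t)" "(LBINT t=0..1. u t) \<le> 1"
    "t\<in>{0..1} \<Longrightarrow> u t = 1 \<Longrightarrow> t \<le> (LBINT t=0..1. u t)"
    "t\<in>{0..1} \<Longrightarrow> u t = 0 \<Longrightarrow> (LBINT t=0..1. u t) \<le> t"
proof -
  define g where "g t = indicator {0<..<1::real} t * u t" for t
  have h: "(\<lambda>t. indicator {0..1::real} t *\<^sub>R u t) \<in> borel_measurable lborel"
    using meas by (subst borel_measurable_restrict_space_iff[symmetric]) auto
  have geq: "g t = indicator {0<..<1::real} t * (indicator {0..1::real} t *\<^sub>R u t)" for t
    by (auto simp: g_def indicator_def)
  have gm: "g \<in> borel_measurable lborel"
    unfolding geq[abs_def] using h by measurable
  have g01: "0 \<le> g t \<and> g t \<le> indicator {0<..<1} t" for t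
    using vals[THEN bspec, of t] by (auto simp: g_def indicator_def)
  have gi: "integrable lborel g"
    by (rule Bochner_Integration.integrable_bound[OF intg_ind_Ioo[of 1] gm])
       (use g01 in \<open>auto simp: abs_of_nonneg\<close>)
  have L: "(LBINT t=0..1. u t) = integral\<^sup>L lborel g"
    unfolding lbint_as_integral g_def ..
  show "0 \<le> (LBINT t=0..1. u t)" unfolding L
    using g01 by (intro Bochner_Integration.integral_nonneg) auto
  have "integral\<^sup>L lborel g \<le> integral\<^sup>L lborel (indicator {0<..<1::real})"
    by (rule integral_mono[OF gi intg_ind_Ioo]) (use g01 in auto)
  then show "(LBINT t=0..1. u t) \<le> 1" unfolding L by simp
  show "t \<le> (LBINT t=0..1. u t)" if t: "t\<in>{0..1}" "u t = 1"
  proof -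
    have "integral\<^sup>L lborel (indicator {0<..<t}) \<le> integral\<^sup>L lborel g"
    proof (rule integral_mono[OF intg_ind_Ioo gi])
      fix s :: real
      show "indicator {0<..<t} s \<le> g s"
      proof (cases "s \<in> {0<..<t}")
        case True
        then have "u t \<le> u s" by (intro mono[rule_format]) (use t in auto)
        moreover have "u s \<in> {0,1}" by (rule vals[rule_format]) (use True t in auto)
        ultimately show ?thesis using True t by (auto simp: g_def indicator_def)
      qed (use g01 in auto)
    qed
    then show ?thesis unfolding L using t by simp
  qed
  show "(LBINT t=0..1. u t) \<le> t" if t: "t\<in>{0..1}" "u t = 0"
  proof -
    have "integral\<^sup>L lborel g \<le> integral\<^sup>L lborel (indicator {0<..<t})"
    proof (rule integral_mono[OF gi intg_ind_Ioo])
      fix s :: real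
      show "g s \<le> indicator {0<..<t} s"
      proof (cases "s \<in> {0<..<1}")
        case True
        show ?thesis
        proof (cases "s < t")
          case True
          then show ?thesis using g01[of s] \<open>s \<in> {0<..<1}\<close> by (auto simp: indicator_def)
        next
          case False
          then have "u s \<le> u t" by (intro mono[rule_format]) (use t True in auto)
          moreover have "u s \<in> {0,1}" by (rule vals[rule_format]) (use True in auto)
          ultimately show ?thesis using t by (auto simp: g_def indicator_def)
        qed
      qed (auto simp: g_def indicator_def)
    qed
    then show ?thesis unfolding L using t by simp
  qed
qed

context prob_space begin

lemma uni_meas:
  assumes "V \<in> borel_measurable M" "distr M borel V = uniform_measure lborel {0..1::real}"
  and "A \<in> sets borel"
  shows "measure M (V -` A \<inter> space M) = measure lborel (A \<inter> {0..1})"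
proof -
  have "measure M (V -` A \<inter> space M) = measure (distr M borel V) A"
    by (rule measure_distr[OF assms(1) assms(3), symmetric])
  also have "\<dots> = measure (uniform_measure lborel {0..1::real}) A" by (simp only: assms(2))
  also have "\<dots> = measure lborel (A \<inter> {0..1})"
  proof -
    have "emeasure (uniform_measure lborel {0..1::real}) A = emeasure lborel (A \<inter> {0..1})"
      using assms(3) by (simp add: Int_commute divide_ennreal_def)
    then show ?thesis unfolding measure_def by simp
  qed
  finally show ?thesis .
qed

lemma vimage_subalg:
  assumes "V \<in> borel_measurable M"
  shows "sigma_finite_subalgebra M (vimage_algebra (space M) V borel)"
proof -
  have "subalgebra M (vimage_algebra (space M) V borel)"
    unfolding subalgebra_def using assms
    by (auto simp: sets_vimage_algebra2)
  then interpret finite_measure_subalgebra M "vimage_algebra (space M) V borel"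
    by unfold_locales
  show ?thesis by unfold_locales
qed

lemma fst_meas[measurable]:
  "(\<lambda>x::real\<times>'b. fst x) \<in> borel_measurable (restrict_space lborel {0..1} \<Otimes>\<^sub>M N)"
  by (rule measurable_compose[OF measurable_fst measurable_restrict_space1]) simp

lemma dir1:
  fixes X :: "'a \<Rightarrow> real^'n" and Y V :: "'a \<Rightarrow> real"
  assumes [measurable]: "X \<in> borel_measurable M" and bX: "\<And>\<omega>. \<omega>\<in>space M \<Longrightarrow> norm (X \<omega>) \<le> CX"
   and [measurable]: "Y \<in> borel_measurable M" and bY: "\<And>\<omega>. \<omega> \<in> space M \<Longrightarrow> \<bar>Y \<omega>\<bar> \<le> CY"
   and [measurable]: "V \<in> borel_measurable M" and D: "distr M borel V = uniform_measure lborel {0..1}"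
   and CE: "\<forall>i. AE \<omega> in M. real_cond_exp M (vimage_algebra (space M) V borel) (\<lambda>\<omega>. X \<omega> $ i) \<omega> = 0"
  defines "U \<equiv> \<lambda>t \<omega>. if t < V \<omega> then 1 else (0::real)"
  shows "(\<lambda>(t,\<omega>). U t \<omega>) \<in> borel_measurable (restrict_space lborel {0..1} \<Otimes>\<^sub>M M)"
   "\<forall>\<omega>\<in>space M. \<forall>s\<in>{0..1}. \<forall>t\<in>{0..1}. s \<le> t \<longrightarrow> U t \<omega> \<le> U s \<omega>"
   "\<forall>t\<in>{0..1}. \<forall>\<omega>\<in>space M. U t \<omega> \<in> {0,1}"
   "\<forall>t\<in>{0..1}. expectation (U t) = 1 - t"
   "\<forall>t\<in>{0..1}. expectation (\<lambda>\<omega>. U t \<omega> *\<^sub>R X \<omega>) = 0"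
   "expectation (\<lambda>\<omega>. LBINT t=0..1. U t \<omega> * Y \<omega>) = expectation (\<lambda>\<omega>. V \<omega> * Y \<omega>)"
proof -
  have Xi[measurable]: "(\<lambda>\<omega>. X \<omega> $ i) \<in> borel_measurable M" for i
    using measurable_compose[OF assms(1) borel_measurable_nth] by simp
  have CX0: "0 \<le> CX"
    using bX not_empty by (meson all_not_in_conv norm_ge_zero order_trans)
  show "(\<lambda>(t,\<omega>). U t \<omega>) \<in> borel_measurable (restrict_space lborel {0..1} \<Otimes>\<^sub>M M)"
    unfolding U_def by measurable
  show "\<forall>\<omega>\<in>space M. \<forall>s\<in>{0..1}. \<forall>t\<in>{0..1}. s \<le> t \<longrightarrow> U t \<omega> \<le> U s \<omega>"
    unfolding U_def by auto
  show "\<forall>t\<in>{0..1}. \<forall>\<omega>\<in>space M. U t \<omega> \<in> {0,1}"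
    unfolding U_def by auto
  have Um[measurable]: "U t \<in> borel_measurable M" for t unfolding U_def by measurable
  have EU: "expectation (U t) = 1 - t" if t: "t \<in> {0..1}" for t
  proof -
    have "expectation (U t) = expectation (indicator (V -` {t<..} \<inter> space M))"
      by (rule Bochner_Integration.integral_cong) (auto simp: U_def indicator_def)
    also have "\<dots> = measure M (V -` {t<..} \<inter> space M)" by simp
    also have "\<dots> = measure lborel ({t<..} \<inter> {0..1})"
      by (rule uni_meas) (use D in auto)
    also have "{t<..} \<inter> {0..1} = {t<..1}" using t by auto
    finally show ?thesis using t by simp
  qed
  then show "\<forall>t\<in>{0..1}. expectation (U t) = 1 - t" by blast
  interpret S: sigma_finite_subalgebra M "vimage_algebra (space M) V borel"
    by (rule vimage_subalg) simp
  have Vm: "V \<in> borel_measurable (vimage_algebra (space M) V borel)"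
    by (rule measurable_vimage_algebra1) simp
  have UmF: "U t \<in> borel_measurable (vimage_algebra (space M) V borel)" for t
    unfolding U_def using Vm by measurable
  show "\<forall>t\<in>{0..1}. expectation (\<lambda>\<omega>. U t \<omega> *\<^sub>R X \<omega>) = 0"
  proof (intro ballI)
    fix t :: real assume t: "t \<in> {0..1}"
    have UX: "integrable M (\<lambda>\<omega>. U t \<omega> *\<^sub>R X \<omega>)"
      by (rule integrable_const_bound[where B=CX]) (use bX CX0 in \<open>auto simp: U_def\<close>)
    have "expectation (\<lambda>\<omega>. U t \<omega> *\<^sub>R X \<omega>) $ i = 0" for i
    proof -
      have "expectation (\<lambda>\<omega>. U t \<omega> *\<^sub>R X \<omega>) $ i = expectation (\<lambda>\<omega>. U t \<omega> * X \<omega> $ i)"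
        using integral_bounded_linear[OF bounded_linear_vec_nth UX, of i] by simp
      also have "\<dots> = expectation (\<lambda>\<omega>. U t \<omega> * real_cond_exp M (vimage_algebra (space M) V borel) (\<lambda>\<omega>. X \<omega> $ i) \<omega>)"
      proof (rule S.real_cond_exp_intg(2)[symmetric])
        show "integrable M (\<lambda>\<omega>. U t \<omega> * X \<omega> $ i)"
          by (rule integrable_const_bound[where B=CX])
             (use bX CX0 in \<open>auto simp: U_def intro: order_trans[OF component_le_norm_cart]\<close>)
      qed (use UmF in auto)
      also have "\<dots> = expectation (\<lambda>\<omega>. 0)"
        by (rule integral_cong_AE) (use CE[rule_format, of i] in auto)
      finally show ?thesis by simp
    qed
    then show "expectation (\<lambda>\<omega>. U t \<omega> *\<^sub>R X \<omega>) = 0" by (simp add: vec_eq_iff)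
  qed
  have AE01: "AE \<omega> in M. V \<omega> \<in> {0..1}"
  proof -
    have "prob (V -` {0..1} \<inter> space M) = measure lborel ({0..1::real} \<inter> {0..1})"
      by (rule uni_meas) (use D in auto)
    then have "prob (V -` {0..1} \<inter> space M) = 1" by simp
    then have "AE \<omega> in M. \<omega> \<in> V -` {0..1} \<inter> space M"
      by (subst AE_in_set_eq_1) auto
    then show ?thesis by auto
  qed
  show "expectation (\<lambda>\<omega>. LBINT t=0..1. U t \<omega> * Y \<omega>) = expectation (\<lambda>\<omega>. V \<omega> * Y \<omega>)"
  proof -
    have "expectation (\<lambda>\<omega>. LBINT t=0..1. U t \<omega> * Y \<omega>) = expectation (\<lambda>\<omega>. max 0 (min (V \<omega>) 1) * Y \<omega>)"
      unfolding U_def lbint_step ..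
    also have "\<dots> = expectation (\<lambda>\<omega>. V \<omega> * Y \<omega>)"
      by (rule integral_cong_AE) (use AE01 in auto)
    finally show ?thesis .
  qed
qed


lemma dir2:
  fixes X :: "'a \<Rightarrow> real^'n" and Y :: "'a \<Rightarrow> real" and U :: "real \<Rightarrow> 'a \<Rightarrow> real"
  assumes [measurable]: "X \<in> borel_measurable M" and bX: "\<And>\<omega>. \<omega>\<in>space M \<Longrightarrow> norm (X \<omega>) \<le> CX"
   and EX: "expectation X = 0"
   and [measurable]: "Y \<in> borel_measurable M"
   and Um: "(\<lambda>(t,\<omega>). U t \<omega>) \<in> borel_measurable (restrict_space lborel {0..1} \<Otimes>\<^sub>M M)"
   and mono: "\<forall>\<omega>\<in>space M. \<forall>s\<in>{0..1}. \<forall>t\<in>{0..1}. s \<le> t \<longrightarrow> U t \<omega> \<le> U s \<omega>"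
   and vals: "\<forall>t\<in>{0..1}. \<forall>\<omega>\<in>space M. U t \<omega> \<in> {0,1}"
   and EU: "\<forall>t\<in>{0..1}. expectation (U t) = 1 - t"
   and EUX: "\<forall>t\<in>{0..1}. expectation (\<lambda>\<omega>. U t \<omega> *\<^sub>R X \<omega>) = 0"
  defines "V \<equiv> \<lambda>\<omega>. LBINT t=0..1. U t \<omega>"
  shows "V \<in> borel_measurable M" "distr M borel V = uniform_measure lborel {0..1}"
   "\<forall>i. AE \<omega> in M. real_cond_exp M (vimage_algebra (space M) V borel) (\<lambda>\<omega>. X \<omega> $ i) \<omega> = 0"
   "expectation (\<lambda>\<omega>. LBINT t=0..1. U t \<omega> * Y \<omega>) = expectation (\<lambda>\<omega>. V \<omega> * Y \<omega>)"
proof -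
  have Xi[measurable]: "(\<lambda>\<omega>. X \<omega> $ i) \<in> borel_measurable M" for i
    using measurable_compose[OF assms(1) borel_measurable_nth] by simp
  have CX0: "0 \<le> CX"
    using bX not_empty by (meson all_not_in_conv norm_ge_zero order_trans)
  have intX: "integrable M X"
    by (rule integrable_const_bound[where B=CX]) (use bX in auto)
  have intXi: "integrable M (\<lambda>\<omega>. X \<omega> $ i)" for i
    by (rule integrable_const_bound[where B=CX])
       (use bX in \<open>auto intro: order_trans[OF component_le_norm_cart]\<close>)
  have EXi: "expectation (\<lambda>\<omega>. X \<omega> $ i) = 0" for i
    using integral_bounded_linear[OF bounded_linear_vec_nth intX, of i] EX by simp
  have Ut[measurable]: "U t \<in> borel_measurable M" if "t \<in> {0..1}" for t
    using measurable_compose[OF measurable_Pair1' Um, of t] that by simp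
  have Uw: "(\<lambda>t. U t \<omega>) \<in> borel_measurable (restrict_space lborel {0..1})" if "\<omega> \<in> space M" for \<omega>
    using measurable_compose[OF measurable_Pair2' Um, of \<omega>] that by simp
  have pwV: "0 \<le> V \<omega>" "V \<omega> \<le> 1"
    "t\<in>{0..1} \<Longrightarrow> U t \<omega> = 1 \<Longrightarrow> t \<le> V \<omega>"
    "t\<in>{0..1} \<Longrightarrow> U t \<omega> = 0 \<Longrightarrow> V \<omega> \<le> t" if w: "\<omega> \<in> space M" for \<omega> t
    unfolding V_def using pw[OF Uw[OF w]] vals mono w by auto
  show Vm[measurable]: "V \<in> borel_measurable M"
  proof -
    have Veq: "V \<omega> = integral\<^sup>L (restrict_space lborel {0..1}) (\<lambda>t. indicator {0<..<1::real} t * U t \<omega>)" for \<omega>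
      unfolding V_def lbint_as_integral
      by (subst integral_restrict_space) (auto intro!: Bochner_Integration.integral_cong simp: indicator_def)
    moreover have "(\<lambda>\<omega>. integral\<^sup>L (restrict_space lborel {0..1}) (\<lambda>t. indicator {0<..<1::real} t * U t \<omega>))
        \<in> borel_measurable M"
    proof (rule sigma_finite_measure.borel_measurable_lebesgue_integral)
      show "sigma_finite_measure (restrict_space lborel {0..1::real})"
        by (rule sigma_finite_measure_restrict_space) (auto intro: sigma_finite_lborel)
      have sw: "(\<lambda>(\<omega>,t). U t \<omega>) \<in> borel_measurable (M \<Otimes>\<^sub>M restrict_space lborel {0..1})"
        using measurable_compose[OF measurable_pair_swap' Um] by (simp add: case_prod_beta)
      have sn: "(\<lambda>(\<omega>,t). indicator {0<..<1::real} t :: real) \<in> borel_measurable (M \<Otimes>\<^sub>M restrict_space lborel {0..1})"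
      proof -
        have "(indicator {0<..<1::real} :: real \<Rightarrow> real) \<in> borel_measurable (restrict_space lborel {0..1})"
          by (rule measurable_restrict_space1) simp
        from measurable_compose[OF measurable_snd[of M] this] show ?thesis
          by (simp add: case_prod_beta)
      qed
      show "(\<lambda>(\<omega>,t). indicator {0<..<1::real} t * U t \<omega>) \<in> borel_measurable (M \<Otimes>\<^sub>M restrict_space lborel {0..1})"
        using borel_measurable_times[OF sn sw] by (simp add: case_prod_beta)
    qed
    moreover have "V = (\<lambda>\<omega>. integral\<^sup>L (restrict_space lborel {0..1}) (\<lambda>t. indicator {0<..<1::real} t * U t \<omega>))"
      using Veq by (simp add: fun_eq_iff)
    ultimately show ?thesis by simp
  qed
  define Z where "Z x = {\<omega>\<in>space M. U x \<omega> = 0}" for x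
  have Zs[measurable]: "Z x \<in> sets M" if "x \<in> {0..1}" for x
    unfolding Z_def using that by measurable
  have PZ: "prob (Z x) = x" if x: "x \<in> {0..1}" for x
  proof -
    have "1 - x = expectation (U x)" using EU x by simp
    also have "\<dots> = expectation (indicator (space M - Z x))"
      by (rule Bochner_Integration.integral_cong) (use vals x in \<open>auto simp: Z_def indicator_def\<close>)
    also have "\<dots> = prob (space M - Z x)" by (simp add: Int_absorb2 Diff_subset)
    also have "\<dots> = 1 - prob (Z x)" using prob_compl[OF Zs[OF x]] by simp
    finally show ?thesis by simp
  qed
  have PV: "prob (V -` {..x} \<inter> space M) = x" if x: "0 \<le> x" "x < 1" for x
  proof (rule antisym)
    have "Z x \<subseteq> V -` {..x} \<inter> space M"
      using pwV(4)[of _ x] x by (auto simp: Z_def)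
    then have "prob (Z x) \<le> prob (V -` {..x} \<inter> space M)"
      by (intro finite_measure_mono) auto
    then show "x \<le> prob (V -` {..x} \<inter> space M)" using PZ x by simp
    show "prob (V -` {..x} \<inter> space M) \<le> x"
    proof (rule dense_ge_bounded[OF x(2)])
      fix y assume y: "x < y" "y < 1"
      have "V -` {..x} \<inter> space M \<subseteq> Z y"
      proof
        fix \<omega> assume w: "\<omega> \<in> V -` {..x} \<inter> space M"
        have "U y \<omega> \<in> {0,1}" using vals y x w by auto
        moreover have "U y \<omega> \<noteq> 1" using pwV(3)[of \<omega> y] w y x by auto
        ultimately show "\<omega> \<in> Z y" using w by (auto simp: Z_def)
      qed
      then have "prob (V -` {..x} \<inter> space M) \<le> prob (Z y)"
        using y x by (intro finite_measure_mono) auto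
      then show "prob (V -` {..x} \<inter> space M) \<le> y" using PZ[of y] y x by simp
    qed
  qed
  show "distr M borel V = uniform_measure lborel {0..1}"
  proof (rule cdf_unique)
    show "real_distribution (distr M borel V)" by simp
    show "real_distribution (uniform_measure lborel {0..1::real})"
      unfolding real_distribution_def real_distribution_axioms_def by (auto intro!: prob_space_uniform_measure)
    show "cdf (distr M borel V) = cdf (uniform_measure lborel {0..1})"
    proof
      fix x :: real
      have "cdf (distr M borel V) x = prob (V -` {..x} \<inter> space M)"
        unfolding cdf_def by (rule measure_distr) auto
      also have "\<dots> = measure lborel ({..x} \<inter> {0..1})"
      proof -
        consider "x < 0" | "0 \<le> x" "x < 1" | "1 \<le> x" by linarith
        then show ?thesis
        proof cases
          case 1
          then have "V -` {..x} \<inter> space M = {}" using pwV(1) by force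
          moreover have "{..x} \<inter> {0..1} = {}" using 1 by auto
          ultimately show ?thesis by simp
        next
          case 2
          then have "{..x} \<inter> {0..1} = {0..x}" by auto
          then show ?thesis using PV 2 by simp
        next
          case 3
          then have "V -` {..x} \<inter> space M = space M" using pwV(2) by force
          moreover have "{..x} \<inter> {0..1} = {0..1}" using 3 by auto
          ultimately show ?thesis by (simp add: prob_space)
        qed
      qed
      also have "\<dots> = cdf (uniform_measure lborel {0..1}) x"
      proof -
        have "emeasure (uniform_measure lborel {0..1::real}) {..x} = emeasure lborel ({..x} \<inter> {0..1})"
          by (simp add: Int_commute divide_ennreal_def)
        then show ?thesis unfolding cdf_def measure_def by simp
      qed
      finally show "cdf (distr M borel V) x = cdf (uniform_measure lborel {0..1}) x" .
    qed
  qed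
  have sint: "set_integrable M S (\<lambda>\<omega>. X \<omega> $ i)" if "S \<in> sets M" for S i
    unfolding set_integrable_def by (rule integrable_mult_indicator[OF that intXi])
  have EUXi: "expectation (\<lambda>\<omega>. U t \<omega> * X \<omega> $ i) = 0" if t: "t \<in> {0..1}" for t i
  proof -
    have UX: "integrable M (\<lambda>\<omega>. U t \<omega> *\<^sub>R X \<omega>)"
    proof (rule integrable_const_bound[where B=CX])
      show "AE \<omega> in M. norm (U t \<omega> *\<^sub>R X \<omega>) \<le> CX"
      proof (rule AE_I2)
        fix \<omega> assume w: "\<omega> \<in> space M"
        then have "U t \<omega> \<in> {0,1}" using vals t by auto
        then show "norm (U t \<omega> *\<^sub>R X \<omega>) \<le> CX" using bX[OF w] CX0 by auto
      qed
    qed (use t in simp)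
    have "expectation (\<lambda>\<omega>. U t \<omega> * X \<omega> $ i) = expectation (\<lambda>\<omega>. U t \<omega> *\<^sub>R X \<omega>) $ i"
      using integral_bounded_linear[OF bounded_linear_vec_nth UX, of i] by simp
    then show ?thesis using EUX t by simp
  qed
  show "\<forall>i. AE \<omega> in M. real_cond_exp M (vimage_algebra (space M) V borel) (\<lambda>\<omega>. X \<omega> $ i) \<omega> = 0"
  proof
    fix i
    interpret S: sigma_finite_subalgebra M "vimage_algebra (space M) V borel"
      by (rule vimage_subalg) simp
    have P: "(LINT \<omega>:(V -` B \<inter> space M)|M. X \<omega> $ i) = 0" if B: "B \<in> sets borel" for B
    proof -
      have G: "B \<in> sigma_sets UNIV (range (\<lambda>a. {..a::real}))"
        using B by (simp add: borel_eq_atMost)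
      have I: "Int_stable (range (\<lambda>a. {..a::real}))"
        by (auto simp: Int_stable_def Int_atMost)
      have C: "range (\<lambda>a. {..a::real}) \<subseteq> Pow UNIV" by auto
      from I C G show ?thesis
      proof (induction B rule: sigma_sets_induct_disjoint)
        case (basic A)
        then obtain x where A: "A = {..x}" by auto
        consider "x < 0" | "0 \<le> x" "x < 1" | "1 \<le> x" by linarith
        then show ?case
        proof cases
          case 1
          then have "V -` A \<inter> space M = {}" using pwV(1) A by force
          then show ?thesis by (simp add: set_lebesgue_integral_def)
        next
          case 3
          then have "V -` A \<inter> space M = space M" using pwV(2) A by force
          then show ?thesis using set_integral_space[OF intXi] EXi by simp
        next
          case 2
          let ?S = "V -` A \<inter> space M"
          have Ss: "?S \<in> sets M" by (rule measurable_sets[OF Vm]) (simp add: A)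
          have sub: "Z x \<subseteq> ?S" using pwV(4)[of _ x] 2 A by (auto simp: Z_def)
          have "measure M (?S - Z x) = prob ?S - prob (Z x)"
            by (rule finite_measure_Diff) (use Ss sub 2 in auto)
          also have "\<dots> = 0" using PV[OF 2] PZ[of x] 2 A by simp
          finally have "?S - Z x \<in> null_sets M"
            using Ss Zs[of x] 2 by (auto simp: null_sets_def emeasure_eq_measure)
          from AE_not_in[OF this] have ae: "AE \<omega> in M. \<omega> \<in> Z x \<longleftrightarrow> \<omega> \<in> ?S"
            using sub by auto
          have "(LINT \<omega>:?S|M. X \<omega> $ i) = (LINT \<omega>:Z x|M. X \<omega> $ i)"
            by (rule set_integral_cong_set) (use Ss Zs[of x] 2 ae in \<open>auto simp: set_borel_measurable_def\<close>)
          also have "\<dots> = expectation (\<lambda>\<omega>. X \<omega> $ i - U x \<omega> * X \<omega> $ i)"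
            unfolding set_lebesgue_integral_def
          proof (rule Bochner_Integration.integral_cong)
            fix \<omega> assume w: "\<omega> \<in> space M"
            then have "U x \<omega> \<in> {0,1}" using vals 2 by auto
            then show "indicator (Z x) \<omega> *\<^sub>R X \<omega> $ i = X \<omega> $ i - U x \<omega> * X \<omega> $ i"
              using w by (auto simp: Z_def indicator_def)
          qed simp
          also have "\<dots> = expectation (\<lambda>\<omega>. X \<omega> $ i) - expectation (\<lambda>\<omega>. U x \<omega> * X \<omega> $ i)"
          proof (rule Bochner_Integration.integral_diff[OF intXi])
            show "integrable M (\<lambda>\<omega>. U x \<omega> * X \<omega> $ i)"
            proof (rule integrable_const_bound[where B=CX])
              show "AE \<omega> in M. norm (U x \<omega> * X \<omega> $ i) \<le> CX"
              proof (rule AE_I2)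
                fix \<omega> assume w: "\<omega> \<in> space M"
                then have "U x \<omega> \<in> {0,1}" using vals 2 by auto
                moreover have "norm (X \<omega> $ i) \<le> CX"
                  using bX[OF w] component_le_norm_cart[of "X \<omega>" i] by simp
                ultimately show "norm (U x \<omega> * X \<omega> $ i) \<le> CX" using CX0 by auto
              qed
            qed (use 2 in simp)
          qed
          also have "\<dots> = 0" using EXi EUXi[of x i] 2 by simp
          finally show ?thesis by (simp add: A)
        qed
      next
        case empty
        then show ?case by (simp add: set_lebesgue_integral_def)
      next
        case (compl A)
        have Ab: "A \<in> sets borel" using compl(1) by (simp add: borel_eq_atMost)
        let ?S = "V -` A \<inter> space M"
        have Ss: "?S \<in> sets M" by (rule measurable_sets[OF Vm Ab])
        have eq: "V -` (UNIV - A) \<inter> space M = space M - ?S" by auto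
        have "expectation (\<lambda>\<omega>. X \<omega> $ i) = (LINT \<omega>:(?S \<union> (space M - ?S))|M. X \<omega> $ i)"
          using set_integral_space[OF intXi[of i]] by (simp add: Un_absorb1)
        also have "\<dots> = (LINT \<omega>:?S|M. X \<omega> $ i) + (LINT \<omega>:(space M - ?S)|M. X \<omega> $ i)"
          by (rule set_integral_Un) (use Ss sint in auto)
        finally show ?case using compl(2) EXi eq by simp
      next
        case (union A)
        have Ab: "A j \<in> sets borel" for j using union(2) by (auto simp: borel_eq_atMost)
        have eq: "V -` (\<Union>j. A j) \<inter> space M = (\<Union>j. V -` A j \<inter> space M)" by auto
        have "(LINT \<omega>:(\<Union>j. V -` A j \<inter> space M)|M. X \<omega> $ i) = (\<Sum>j. LINT \<omega>:(V -` A j \<inter> space M)|M. X \<omega> $ i)"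
        proof (rule lebesgue_integral_countable_add)
          show "V -` A j \<inter> space M \<in> sets M" for j by (rule measurable_sets[OF Vm Ab])
          show "(V -` A j \<inter> space M) \<inter> (V -` A k \<inter> space M) = {}" if "j \<noteq> k" for j k
            using union(1) that by (auto simp: disjoint_family_on_def)
          show "set_integrable M (\<Union>j. V -` A j \<inter> space M) (\<lambda>\<omega>. X \<omega> $ i)"
            by (rule sint, rule sets.countable_UN) (use measurable_sets[OF Vm Ab] in auto)
        qed
        then show ?case using union(3) eq by simp
      qed
    qed
    show "AE \<omega> in M. real_cond_exp M (vimage_algebra (space M) V borel) (\<lambda>\<omega>. X \<omega> $ i) \<omega> = 0"
    proof (rule S.real_cond_exp_charact)
      fix A assume "A \<in> sets (vimage_algebra (space M) V borel)"
      then obtain B where "B \<in> sets borel" "A = V -` B \<inter> space M"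
        by (auto simp: sets_vimage_algebra2)
      then show "(LINT \<omega>:A|M. X \<omega> $ i) = (LINT \<omega>:A|M. 0)"
        using P by (simp add: set_lebesgue_integral_def)
    qed (auto intro: intXi)
  qed
  show "expectation (\<lambda>\<omega>. LBINT t=0..1. U t \<omega> * Y \<omega>) = expectation (\<lambda>\<omega>. V \<omega> * Y \<omega>)"
    unfolding V_def by simp
qed

end
theorem mainTheorem10:
  fixes M :: "'a measure" and X :: "'a \<Rightarrow> real ^ 'n" and Y :: "'a \<Rightarrow> real"
  assumes "prob_space M"
    and "nonatomic M"
    and "X \<in> borel_measurable M" and "\<exists>C. \<forall>\<omega>\<in>space M. norm (X \<omega>) \<le> C"
    and "prob_space.expectation M X = 0"
    and "Y \<in> borel_measurable M" and "\<exists>C. \<forall>\<omega>\<in>space M. \<bar>Y \<omega>\<bar> \<le> C"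
  shows
    "(SUP V \<in> {V. V \<in> borel_measurable M
                  \<and> distr M borel V = uniform_measure lborel {0..1}
                  \<and> (\<forall>i. AE \<omega> in M.
                        real_cond_exp M (vimage_algebra (space M) V borel) (\<lambda>\<omega>. X \<omega> $ i) \<omega> = 0)}.
        ereal (prob_space.expectation M (\<lambda>\<omega>. V \<omega> * Y \<omega>)))
   = (SUP U \<in> {U :: real \<Rightarrow> 'a \<Rightarrow> real.
                  (\<lambda>(t, \<omega>). U t \<omega>) \<in> borel_measurable (restrict_space lborel {0..1} \<Otimes>\<^sub>M M)
                  \<and> (\<forall>\<omega>\<in>space M. \<forall>s\<in>{0..1}. \<forall>t\<in>{0..1}. s \<le> t \<longrightarrow> U t \<omega> \<le> U s \<omega>)
                  \<and> (\<forall>t\<in>{0..1}. \<forall>\<omega>\<in>space M. U t \<omega> \<in> {0, 1})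
                  \<and> (\<forall>t\<in>{0..1}. prob_space.expectation M (U t) = 1 - t)
                  \<and> (\<forall>t\<in>{0..1}. prob_space.expectation M (\<lambda>\<omega>. U t \<omega> *\<^sub>R X \<omega>) = 0)}.
        ereal (prob_space.expectation M (\<lambda>\<omega>. LBINT t=0..1. U t \<omega> * Y \<omega>)))"
proof -
  interpret prob_space M by (rule assms(1))
  obtain CX where bX: "\<And>\<omega>. \<omega>\<in>space M \<Longrightarrow> norm (X \<omega>) \<le> CX" using assms(4) by blast
  obtain CY where bY: "\<And>\<omega>. \<omega>\<in>space M \<Longrightarrow> \<bar>Y \<omega>\<bar> \<le> CY" using assms(7) by blast
  show ?thesis
  proof (rule SUP_eq)
    fix V :: "'a \<Rightarrow> real" assume "V \<in> {V. V \<in> borel_measurable M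
                  \<and> distr M borel V = uniform_measure lborel {0..1}
                  \<and> (\<forall>i. AE \<omega> in M.
                        real_cond_exp M (vimage_algebra (space M) V borel) (\<lambda>\<omega>. X \<omega> $ i) \<omega> = 0)}"
    then have V: "V \<in> borel_measurable M" "distr M borel V = uniform_measure lborel {0..1}"
      "\<forall>i. AE \<omega> in M. real_cond_exp M (vimage_algebra (space M) V borel) (\<lambda>\<omega>. X \<omega> $ i) \<omega> = 0"
      by auto
    note D = dir1[OF assms(3) bX assms(6) bY V]
    show "\<exists>U\<in>{U :: real \<Rightarrow> 'a \<Rightarrow> real.
                  (\<lambda>(t, \<omega>). U t \<omega>) \<in> borel_measurable (restrict_space lborel {0..1} \<Otimes>\<^sub>M M)
                  \<and> (\<forall>\<omega>\<in>space M. \<forall>s\<in>{0..1}. \<forall>t\<in>{0..1}. s \<le> t \<longrightarrow> U t \<omega> \<le> U s \<omega>)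
                  \<and> (\<forall>t\<in>{0..1}. \<forall>\<omega>\<in>space M. U t \<omega> \<in> {0, 1})
                  \<and> (\<forall>t\<in>{0..1}. prob_space.expectation M (U t) = 1 - t)
                  \<and> (\<forall>t\<in>{0..1}. prob_space.expectation M (\<lambda>\<omega>. U t \<omega> *\<^sub>R X \<omega>) = 0)}.
        ereal (prob_space.expectation M (\<lambda>\<omega>. V \<omega> * Y \<omega>))
        \<le> ereal (prob_space.expectation M (\<lambda>\<omega>. LBINT t=0..1. U t \<omega> * Y \<omega>))"
      by (rule bexI[where x="\<lambda>t \<omega>. if t < V \<omega> then 1 else 0"]) (use D in auto)
  next
    fix U assume "U \<in> {U :: real \<Rightarrow> 'a \<Rightarrow> real.
                  (\<lambda>(t, \<omega>). U t \<omega>) \<in> borel_measurable (restrict_space lborel {0..1} \<Otimes>\<^sub>M M)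
                  \<and> (\<forall>\<omega>\<in>space M. \<forall>s\<in>{0..1}. \<forall>t\<in>{0..1}. s \<le> t \<longrightarrow> U t \<omega> \<le> U s \<omega>)
                  \<and> (\<forall>t\<in>{0..1}. \<forall>\<omega>\<in>space M. U t \<omega> \<in> {0, 1})
                  \<and> (\<forall>t\<in>{0..1}. prob_space.expectation M (U t) = 1 - t)
                  \<and> (\<forall>t\<in>{0..1}. prob_space.expectation M (\<lambda>\<omega>. U t \<omega> *\<^sub>R X \<omega>) = 0)}"
    then have U: "(\<lambda>(t, \<omega>). U t \<omega>) \<in> borel_measurable (restrict_space lborel {0..1} \<Otimes>\<^sub>M M)"
                  "(\<forall>\<omega>\<in>space M. \<forall>s\<in>{0..1}. \<forall>t\<in>{0..1}. s \<le> t \<longrightarrow> U t \<omega> \<le> U s \<omega>)"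
                  "(\<forall>t\<in>{0..1}. \<forall>\<omega>\<in>space M. U t \<omega> \<in> {0, 1})"
                  "(\<forall>t\<in>{0..1}. expectation (U t) = 1 - t)"
                  "(\<forall>t\<in>{0..1}. expectation (\<lambda>\<omega>. U t \<omega> *\<^sub>R X \<omega>) = 0)"
      by auto
    note D = dir2[OF assms(3) bX assms(5) assms(6) U]
    show "\<exists>V\<in>{V. V \<in> borel_measurable M
                  \<and> distr M borel V = uniform_measure lborel {0..1}
                  \<and> (\<forall>i. AE \<omega> in M.
                        real_cond_exp M (vimage_algebra (space M) V borel) (\<lambda>\<omega>. X \<omega> $ i) \<omega> = 0)}.
        ereal (prob_space.expectation M (\<lambda>\<omega>. LBINT t=0..1. U t \<omega> * Y \<omega>))
        \<le> ereal (prob_space.expectation M (\<lambda>\<omega>. V \<omega> * Y \<omega>))"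
      by (rule bexI[where x="\<lambda>\<omega>. LBINT t=0..1. U t \<omega>"]) (use D in auto)
  qed
qed

end
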